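(* Let $(x_1,Y_1),\dots,(x_T,Y_T)$ be an arbitrary sequence of examples with $x_t\in\mathbb{R}^d$ and $Y_t\subseteq\mathcal{Y}$, and let $\delta>0$, $\eta>0$. Let $W_1,\dots,W_T$ be the iterates produced by SALT with parameters $\delta,\eta$ on this sequence. Then for any $U_*=[u_*^{(1)},\dots,u_*^{(L+1)}]\in\arg\min_{U\in\mathbb{R}^{d\times(L+1)}}\sum_{t=1}^T f_t(U)$, $$\sum_{t=1}^T\bigl(f_t(W_t)-f_t(U_* )\bigr)\le\Bigl(\frac{Q}{2\eta}+\eta\Bigr)\sum_{i=1}^{L+1}\sum_{j=1}^d\|G^{(i)}_{1:T,j}\|_2+\frac{\delta}{2\eta}\|U_*\|_F^2,$$ where $Q=\max_{i\in[L+1],\,t\in[T]}\|w_t^{(i)}-u_*^{(i)}\|_\infty^2$.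
   Context: Let $L\ge 1$, $d\ge 1$, $[n]=\{1,\dots,n\}$, $\mathcal{Y}=[L]$. A multi-label classifier is a matrix $W=[w^{(1)},\dots,w^{(L+1)}]\in\mathbb{R}^{d\times(L+1)}$ (columns $w^{(i)}\in\mathbb{R}^d$); $\|\cdot\|_F$ is the Frobenius norm. For the $t$-th example $(x_t,Y_t)$, with $x_t\in\mathbb{R}^d$, $Y_t\subseteq\mathcal{Y}$ and $\bar Y_t=\mathcal{Y}\setminus Y_t$, the loss is $$f_t(W)=\frac{1}{|Y_t|}\sum_{i\in Y_t}\max\{0,1-(x_t^\top w^{(i)}-x_t^\top w^{(L+1)})\}+\frac{1}{|\bar Y_t|}\sum_{i\in\bar Y_t}\max\{0,1-(x_t^\top w^{(L+1)}-x_t^\top w^{(i)})\},$$ where a term whose index set is empty is taken to be $0$. Given a current classifier $W_t=[w_t^{(1)},\dots,w_t^{(L+1)}]$, define $a_t^{(i)}=\mathbb{1}[x_t^\top w_t^{(i)}-x_t^\top w_t^{(L+1)}<1]$, $b_t^{(i)}=\mathbb{1}[x_t^\top w_t^{(L+1)}-x_t^\top w_t^{(i)}<1]$, $a_t=\sum_{j\in Y_t}a_t^{(j)}$, $b_t=\sum_{j\in\bar Y_t}b_t^{(j)}$, and $\nabla_t^{(i)}=-\frac{a_t^{(i)}}{|Y_t|}x_t$ if $i\in Y_t$; $\nabla_t^{(i)}=\frac{b_t^{(i)}}{|\bar Y_t|}x_t$ if $i\in\bar Y_t$; $\nabla_t^{(L+1)}=\bigl(\frac{a_t}{|Y_t|}-\frac{b_t}{|\bar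 Y_t|}\bigr)x_t$, where $\frac{a_t}{|Y_t|}$ (resp. $\frac{b_t}{|\bar Y_t|}$) is taken to be $0$ when $Y_t=\emptyset$ (resp. $\bar Y_t=\emptyset$). SALT (second-order adaptive label thresholding) with parameters $\delta>0,\eta>0$: $W_1=0$; at round $t$, compute $\nabla_t^{(i)}$ at the current iterate $W_t$ for all $i\in[L+1]$; let $G^{(i)}_{1:t}=[\nabla_1^{(i)},\dots,\nabla_t^{(i)}]\in\mathbb{R}^{d\times t}$ and let $G^{(i)}_{1:t,j}\in\mathbb{R}^t$ denote its $j$-th row; let $s^{(i)}_t\in\mathbb{R}^d$ with $s^{(i)}_{t,j}=\|G^{(i)}_{1:t,j}\|_2$, and $H_t^{(i)}=\delta I+\mathrm{diag}(s_t^{(i)})$; then $$W_{t+1}=\arg\min_{W}\sum_{i=1}^{L+1}\Bigl(\frac{1}{2\eta}(w^{(i)}-w_t^{(i)})^\top H_t^{(i)}(w^{(i)}-w_t^{(i)})+(\nabla_t^{(i)})^\top w^{(i)}\Bigr),$$ i.e. $w_{t+1}^{(i)}=w_t^{(i)}-\eta (H_t^{(i)})^{-1}\nabla_t^{(i)}$ for all $i\in[L+1]$. *)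

theory Defs
  imports "HOL-Analysis.Analysis"
begin

text \<open>Vectors in R^d are \<open>real ^ 'd\<close>; a classifier W is a function from column
  indices to vectors, where only the columns 1..L+1 are relevant. Labels are {1..L}.\<close>

definition hinge :: "real \<Rightarrow> real" where
  "hinge z = max 0 (1 - z)"

definition compl_labels :: "nat \<Rightarrow> nat set \<Rightarrow> nat set" where
  "compl_labels L Y = {1..L} - Y"

definition ml_loss :: "nat \<Rightarrow> real ^ 'd \<Rightarrow> nat set \<Rightarrow> (nat \<Rightarrow> real ^ 'd) \<Rightarrow> real" where
  "ml_loss L x Y W =
     (if Y = {} then 0 else
        (1 / real (card Y)) * (\<Sum>i\<in>Y. hinge (x \<bullet> W i - x \<bullet> W (L+1))))
   + (if compl_labels L Y = {} then 0 else
        (1 / real (card (compl_labels L Y))) *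
          (\<Sum>i\<in>compl_labels L Y. hinge (x \<bullet> W (L+1) - x \<bullet> W i)))"

definition ind_a :: "nat \<Rightarrow> real ^ 'd \<Rightarrow> (nat \<Rightarrow> real ^ 'd) \<Rightarrow> nat \<Rightarrow> real" where
  "ind_a L x W i = (if x \<bullet> W i - x \<bullet> W (L+1) < 1 then 1 else 0)"

definition ind_b :: "nat \<Rightarrow> real ^ 'd \<Rightarrow> (nat \<Rightarrow> real ^ 'd) \<Rightarrow> nat \<Rightarrow> real" where
  "ind_b L x W i = (if x \<bullet> W (L+1) - x \<bullet> W i < 1 then 1 else 0)"

definition ml_grad :: "nat \<Rightarrow> real ^ 'd \<Rightarrow> nat set \<Rightarrow> (nat \<Rightarrow> real ^ 'd) \<Rightarrow> nat \<Rightarrow> real ^ 'd" where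
  "ml_grad L x Y W i =
     (if i \<in> Y then (- ind_a L x W i / real (card Y)) *\<^sub>R x
      else if i \<in> compl_labels L Y then (ind_b L x W i / real (card (compl_labels L Y))) *\<^sub>R x
      else if i = L + 1 then
        ((if Y = {} then 0 else (\<Sum>j\<in>Y. ind_a L x W j) / real (card Y))
         - (if compl_labels L Y = {} then 0 else
              (\<Sum>j\<in>compl_labels L Y. ind_b L x W j) / real (card (compl_labels L Y)))) *\<^sub>R x
      else 0)"

text \<open>Euclidean norm of the j-th row of G^{(i)}_{1:t}, given the iterate sequence W.\<close>
definition row_norm :: "nat \<Rightarrow> (nat \<Rightarrow> real ^ 'd) \<Rightarrow> (nat \<Rightarrow> nat set) \<Rightarrow> (nat \<Rightarrow> nat \<Rightarrow> real ^ 'd)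
    \<Rightarrow> nat \<Rightarrow> nat \<Rightarrow> 'd \<Rightarrow> real" where
  "row_norm L x Y W t i j = sqrt (\<Sum>k=1..t. ((ml_grad L (x k) (Y k) (W k) i) $ j)\<^sup>2)"

definition salt_iterates :: "real \<Rightarrow> real \<Rightarrow> nat \<Rightarrow> nat \<Rightarrow> (nat \<Rightarrow> real ^ 'd) \<Rightarrow> (nat \<Rightarrow> nat set)
    \<Rightarrow> (nat \<Rightarrow> nat \<Rightarrow> real ^ 'd) \<Rightarrow> bool" where
  "salt_iterates \<delta> \<eta> L T x Y W \<longleftrightarrow>
     (\<forall>i\<in>{1..L+1}. W 1 i = 0) \<and>
     (\<forall>t\<in>{1..<T}. \<forall>i\<in>{1..L+1}.
        W (Suc t) i = (\<chi> j. W t i $ j - \<eta> * (ml_grad L (x t) (Y t) (W t) i $ j)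
                                 / (\<delta> + row_norm L x Y W t i j)))"

definition linf_norm :: "real ^ 'd \<Rightarrow> real" where
  "linf_norm v = Max (range (\<lambda>j. \<bar>v $ j\<bar>))"

definition frob_sq :: "nat \<Rightarrow> (nat \<Rightarrow> real ^ 'd) \<Rightarrow> real" where
  "frob_sq L U = (\<Sum>i=1..L+1. (norm (U i))\<^sup>2)"

end

theory Submission imports Defs begin
lemma norm_sq_vec: "(norm (x::real^'d))\<^sup>2 = (\<Sum>j\<in>UNIV. (x$j)\<^sup>2)"
  unfolding power2_norm_eq_inner by (simp add: inner_vec_def power2_eq_square)


lemma sqrt_step:
  fixes S g \<delta> :: real
  assumes "S \<ge> 0" "\<delta> > 0"
  shows "g\<^sup>2 / (2 * (\<delta> + sqrt (S + g\<^sup>2))) \<le> sqrt (S + g\<^sup>2) - sqrt S"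
proof -
  let ?a = "sqrt (S + g\<^sup>2)" and ?b = "sqrt S"
  have ab: "?b \<le> ?a" using assms by (simp add: real_sqrt_le_iff)
  have b0: "?b \<ge> 0" using assms(1) by simp
  have a2: "?a\<^sup>2 = S + g\<^sup>2" using assms(1) by (intro real_sqrt_pow2) simp
  have b2: "?b\<^sup>2 = S" using assms(1) by (intro real_sqrt_pow2)
  have e: "g\<^sup>2 = (?a - ?b) * (?a + ?b)"
  proof -
    have "(?a - ?b) * (?a + ?b) = ?a\<^sup>2 - ?b\<^sup>2" by (simp add: algebra_simps power2_eq_square)
    then show ?thesis using a2 b2 by simp
  qed
  have "(?a - ?b) * (?a + ?b) \<le> (?a - ?b) * (2 * (\<delta> + ?a))"
  proof (rule mult_left_mono)
    have aux: "b \<le> a \<Longrightarrow> 0 < \<delta> \<Longrightarrow> a + b \<le> 2 * (\<delta> + a)" for a b :: real by (simp add: algebra_simps)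
    show "?a + ?b \<le> 2 * (\<delta> + ?a)" by (rule aux[OF ab assms(2)])
    show "0 \<le> ?a - ?b" using ab by simp
  qed
  moreover have "2 * (\<delta> + ?a) > 0" using assms by (simp add: add_pos_nonneg)
  ultimately show ?thesis using e by (simp add: divide_le_eq)
qed

lemma scalar_bound:
  fixes g w :: "nat \<Rightarrow> real" and u \<delta> \<eta> Q :: real
  assumes \<delta>: "\<delta> > 0" and \<eta>: "\<eta> > 0" and w1: "w 1 = 0"
    and upd: "\<And>t. t \<in> {1..<T} \<Longrightarrow> w (Suc t) = w t - \<eta> * g t / (\<delta> + sqrt (\<Sum>k=1..t. (g k)\<^sup>2))"
    and Qb: "\<And>t. t \<in> {1..T} \<Longrightarrow> (w t - u)\<^sup>2 \<le> Q"
  shows "(\<Sum>t=1..T. g t * (w t - u)) \<le> (Q/(2*\<eta>) + \<eta>) * sqrt (\<Sum>k=1..T. (g k)\<^sup>2) + \<delta>/(2*\<eta>) * u\<^sup>2"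
proof -
  define S where "S n = (\<Sum>k=1..n. (g k)\<^sup>2)" for n
  define h where "h n = \<delta> + sqrt (S n)" for n
  define nxt where "nxt n = (if n = 0 then w 1 else w n - \<eta> * g n / h n)" for n
  define R where "R n = (Q/(2*\<eta>) + \<eta>) * sqrt (S n) + \<delta>/(2*\<eta>) * u\<^sup>2" for n
  have S0: "S n \<ge> 0" for n unfolding S_def by (simp add: sum_nonneg)
  have hpos: "h n > 0" for n unfolding h_def using \<delta> S0[of n] by (simp add: add_pos_nonneg)
  have SS: "S (Suc n) = S n + (g (Suc n))\<^sup>2" for n unfolding S_def by simp
  have claim: "n \<le> T \<Longrightarrow> (\<Sum>t=1..n. g t * (w t - u)) + h n * (nxt n - u)\<^sup>2 / (2*\<eta>) \<le> R n" for n
  proof (induction n)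
    case 0
    show ?case using w1 by (simp add: nxt_def h_def S_def R_def power2_eq_square)
  next
    case (Suc n)
    define a where "a = nxt n - u"
    define g' where "g' = g (Suc n)"
    have wa: "w (Suc n) - u = a"
      using upd[of n] Suc.prems unfolding a_def nxt_def h_def S_def by auto
    have nx: "nxt (Suc n) - u = a - \<eta> * g' / h (Suc n)"
      unfolding nxt_def g'_def using wa by simp
    have iden: "g' * a + h (Suc n) * (a - \<eta> * g' / h (Suc n))\<^sup>2 / (2*\<eta>)
       = h (Suc n) * a\<^sup>2 / (2*\<eta>) + \<eta> * g'\<^sup>2 / (2 * h (Suc n))"
      using hpos[of "Suc n"] \<eta> by (simp add: field_simps power2_eq_square)
    have IH: "(\<Sum>t=1..n. g t * (w t - u)) + h n * a\<^sup>2 / (2*\<eta>) \<le> R n"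
      using Suc by (simp add: a_def)
    have aQ: "a\<^sup>2 \<le> Q" using Qb[of "Suc n"] Suc.prems wa by simp
    have mono: "sqrt (S n) \<le> sqrt (S (Suc n))" unfolding SS by simp
    have t1: "(sqrt (S (Suc n)) - sqrt (S n)) * a\<^sup>2 \<le> (sqrt (S (Suc n)) - sqrt (S n)) * Q"
      using mono aQ by (intro mult_left_mono) auto
    have t2: "g'\<^sup>2 / (2 * h (Suc n)) \<le> sqrt (S (Suc n)) - sqrt (S n)"
      unfolding h_def SS g'_def using sqrt_step[OF S0 \<delta>] by simp
    have t2': "\<eta> * (g'\<^sup>2 / (2 * h (Suc n))) \<le> \<eta> * (sqrt (S (Suc n)) - sqrt (S n))"
      by (rule mult_left_mono[OF t2]) (use \<eta> in simp)
    have hd: "h (Suc n) - h n = sqrt (S (Suc n)) - sqrt (S n)" unfolding h_def by simp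
    have t1': "(h (Suc n) - h n) * a\<^sup>2 / (2*\<eta>) \<le> (sqrt (S (Suc n)) - sqrt (S n)) * Q / (2*\<eta>)"
      using t1 hd \<eta> by (simp add: divide_right_mono)
    have "(\<Sum>t=1..Suc n. g t * (w t - u)) + h (Suc n) * (nxt (Suc n) - u)\<^sup>2 / (2*\<eta>)
        = (\<Sum>t=1..n. g t * (w t - u)) + (g' * a + h (Suc n) * (a - \<eta> * g' / h (Suc n))\<^sup>2 / (2*\<eta>))"
      by (simp add: wa nx g'_def)
    also have "\<dots> = (\<Sum>t=1..n. g t * (w t - u)) + h n * a\<^sup>2 / (2*\<eta>)
        + (h (Suc n) - h n) * a\<^sup>2 / (2*\<eta>) + \<eta> * (g'\<^sup>2 / (2 * h (Suc n)))"
      unfolding iden diff_divide_distrib left_diff_distrib by simp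
    also have "\<dots> \<le> R n + (sqrt (S (Suc n)) - sqrt (S n)) * Q / (2*\<eta>) + \<eta> * (sqrt (S (Suc n)) - sqrt (S n))"
      using IH t1' t2' by linarith
    also have "\<dots> = R (Suc n)" unfolding R_def by (simp add: distrib_right right_diff_distrib diff_divide_distrib algebra_simps)
    finally show ?case .
  qed
  have "h T * (nxt T - u)\<^sup>2 / (2*\<eta>) \<ge> 0" using hpos[of T] \<eta> by simp
  with claim[of T] show ?thesis unfolding R_def S_def by simp
qed

lemma hinge_sub: "hinge z - hinge z' \<le> - (if z < 1 then 1 else 0) * (z - z')"
  unfolding hinge_def by auto

lemma part_bound:
  fixes A :: "nat set" and c :: real and zW zU p :: "nat \<Rightarrow> real"
  assumes "finite A" and "A \<noteq> {}"
  shows "1 / real (card A) * (\<Sum>i\<in>A. hinge (zW i)) - 1 / real (card A) * (\<Sum>i\<in>A. hinge (zU i))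
     \<le> (\<Sum>i\<in>A. (- (if zW i < 1 then 1 else 0) / real (card A)) * (zW i - zU i))"
proof -
  have c: "1 / real (card A) \<ge> 0" by simp
  have "1 / real (card A) * (\<Sum>i\<in>A. hinge (zW i)) - 1 / real (card A) * (\<Sum>i\<in>A. hinge (zU i))
      = 1 / real (card A) * (\<Sum>i\<in>A. hinge (zW i) - hinge (zU i))"
    by (simp add: sum_subtractf right_diff_distrib)
  also have "\<dots> \<le> 1 / real (card A) * (\<Sum>i\<in>A. - (if zW i < 1 then 1 else 0) * (zW i - zU i))"
    by (intro mult_left_mono sum_mono hinge_sub c)
  also have "\<dots> = (\<Sum>i\<in>A. (- (if zW i < 1 then 1 else 0) / real (card A)) * (zW i - zU i))"
    by (simp add: sum_distrib_left)
  finally show ?thesis .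
qed

lemma loss_convex:
  fixes x :: "real ^ 'd"
  assumes Y: "Y \<subseteq> {1..L}"
  shows "ml_loss L x Y W - ml_loss L x Y U \<le> (\<Sum>i=1..L+1. ml_grad L x Y W i \<bullet> (W i - U i))"
proof -
  define C where "C = compl_labels L Y"
  define d where "d i = x \<bullet> (W i - U i)" for i
  define a where "a i = ind_a L x W i" for i
  define b where "b i = ind_b L x W i" for i
  have fY: "finite Y" using Y finite_subset by blast
  have fC: "finite C" unfolding C_def compl_labels_def by simp
  have LY: "L + 1 \<notin> Y" using Y by auto
  have LC: "L + 1 \<notin> C" unfolding C_def compl_labels_def by auto
  have YC: "Y \<inter> C = {}" unfolding C_def compl_labels_def by auto
  have split: "{1..L+1} = (Y \<union> C) \<union> {L+1}" unfolding C_def compl_labels_def using Y by auto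
  define P1 where "P1 = (\<Sum>i\<in>Y. (- a i / real (card Y)) * d i) + (if Y = {} then 0 else (\<Sum>j\<in>Y. a j) / real (card Y)) * d (L+1)"
  define P2 where "P2 = (\<Sum>i\<in>C. (b i / real (card C)) * d i) - (if C = {} then 0 else (\<Sum>j\<in>C. b j) / real (card C)) * d (L+1)"
  have b1: "(if Y = {} then 0 else (1 / real (card Y)) * (\<Sum>i\<in>Y. hinge (x \<bullet> W i - x \<bullet> W (L+1))))
          - (if Y = {} then 0 else (1 / real (card Y)) * (\<Sum>i\<in>Y. hinge (x \<bullet> U i - x \<bullet> U (L+1)))) \<le> P1"
  proof (cases "Y = {}")
    case True then show ?thesis by (simp add: P1_def)
  next
    case False
    have "?thesis = ((1 / real (card Y)) * (\<Sum>i\<in>Y. hinge (x \<bullet> W i - x \<bullet> W (L+1)))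
          - (1 / real (card Y)) * (\<Sum>i\<in>Y. hinge (x \<bullet> U i - x \<bullet> U (L+1))) \<le> P1)" using False by simp
    moreover have "(\<Sum>i\<in>Y. (- (if x \<bullet> W i - x \<bullet> W (L+1) < 1 then 1 else 0) / real (card Y))
             * ((x \<bullet> W i - x \<bullet> W (L+1)) - (x \<bullet> U i - x \<bullet> U (L+1)))) = P1"
    proof -
      have "(\<Sum>i\<in>Y. (- (if x \<bullet> W i - x \<bullet> W (L+1) < 1 then 1 else 0) / real (card Y))
             * ((x \<bullet> W i - x \<bullet> W (L+1)) - (x \<bullet> U i - x \<bullet> U (L+1))))
          = (\<Sum>i\<in>Y. (- a i / real (card Y)) * d i + (a i / real (card Y)) * d (L+1))"
        by (rule sum.cong) (auto simp: a_def ind_a_def d_def inner_diff_right algebra_simps simp flip: add_divide_distrib diff_divide_distrib)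
      also have "\<dots> = P1" using False
        by (simp add: P1_def sum.distrib sum_distrib_right sum_divide_distrib sum_subtractf sum_negf)
      finally show ?thesis .
    qed
    ultimately show ?thesis using part_bound[OF fY False, of "\<lambda>i. x \<bullet> W i - x \<bullet> W (L+1)" "\<lambda>i. x \<bullet> U i - x \<bullet> U (L+1)"]
      by simp
  qed
  have b2: "(if C = {} then 0 else (1 / real (card C)) * (\<Sum>i\<in>C. hinge (x \<bullet> W (L+1) - x \<bullet> W i)))
          - (if C = {} then 0 else (1 / real (card C)) * (\<Sum>i\<in>C. hinge (x \<bullet> U (L+1) - x \<bullet> U i))) \<le> P2"
  proof (cases "C = {}")
    case True then show ?thesis by (simp add: P2_def)
  next
    case False
    have "?thesis = ((1 / real (card C)) * (\<Sum>i\<in>C. hinge (x \<bullet> W (L+1) - x \<bullet> W i))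
          - (1 / real (card C)) * (\<Sum>i\<in>C. hinge (x \<bullet> U (L+1) - x \<bullet> U i)) \<le> P2)" using False by simp
    moreover have "(\<Sum>i\<in>C. (- (if x \<bullet> W (L+1) - x \<bullet> W i < 1 then 1 else 0) / real (card C))
             * ((x \<bullet> W (L+1) - x \<bullet> W i) - (x \<bullet> U (L+1) - x \<bullet> U i))) = P2"
    proof -
      have "(\<Sum>i\<in>C. (- (if x \<bullet> W (L+1) - x \<bullet> W i < 1 then 1 else 0) / real (card C))
             * ((x \<bullet> W (L+1) - x \<bullet> W i) - (x \<bullet> U (L+1) - x \<bullet> U i)))
          = (\<Sum>i\<in>C. (b i / real (card C)) * d i - (b i / real (card C)) * d (L+1))"
        by (rule sum.cong) (auto simp: b_def ind_b_def d_def inner_diff_right algebra_simps simp flip: add_divide_distrib diff_divide_distrib)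
      also have "\<dots> = P2" using False
        by (simp add: P2_def sum.distrib sum_distrib_right sum_divide_distrib sum_subtractf sum_negf)
      finally show ?thesis .
    qed
    ultimately show ?thesis using part_bound[OF fC False, of "\<lambda>i. x \<bullet> W (L+1) - x \<bullet> W i" "\<lambda>i. x \<bullet> U (L+1) - x \<bullet> U i"]
      by simp
  qed
  have eq: "(\<Sum>i=1..L+1. ml_grad L x Y W i \<bullet> (W i - U i)) = P1 + P2"
  proof -
    have "(\<Sum>i=1..L+1. ml_grad L x Y W i \<bullet> (W i - U i))
        = (\<Sum>i\<in>Y. ml_grad L x Y W i \<bullet> (W i - U i)) + (\<Sum>i\<in>C. ml_grad L x Y W i \<bullet> (W i - U i))
          + ml_grad L x Y W (L+1) \<bullet> (W (L+1) - U (L+1))"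
      unfolding split using fY fC YC LY LC by (simp add: sum.union_disjoint)
    also have "(\<Sum>i\<in>Y. ml_grad L x Y W i \<bullet> (W i - U i)) = (\<Sum>i\<in>Y. (- a i / real (card Y)) * d i)"
      by (rule sum.cong) (auto simp: ml_grad_def a_def d_def)
    also have "(\<Sum>i\<in>C. ml_grad L x Y W i \<bullet> (W i - U i)) = (\<Sum>i\<in>C. (b i / real (card C)) * d i)"
      by (rule sum.cong) (use YC in \<open>auto simp: ml_grad_def b_def d_def C_def\<close>)
    also have "ml_grad L x Y W (L+1) \<bullet> (W (L+1) - U (L+1))
       = (if Y = {} then 0 else (\<Sum>j\<in>Y. a j) / real (card Y)) * d (L+1)
         - (if C = {} then 0 else (\<Sum>j\<in>C. b j) / real (card C)) * d (L+1)"
      using LY LC by (simp add: ml_grad_def a_def b_def d_def C_def left_diff_distrib)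
    finally show ?thesis by (simp add: P1_def P2_def)
  qed
  show ?thesis unfolding eq ml_loss_def using b1 b2 unfolding C_def by linarith
qed

lemma Qbound:
  fixes W :: "nat \<Rightarrow> nat \<Rightarrow> real ^ 'd" and U :: "nat \<Rightarrow> real ^ 'd"
  assumes "i \<in> {1..L+1}" "t \<in> {1..T}"
  shows "(W t i $ j - U i $ j)\<^sup>2 \<le> Max {(linf_norm (W t i - U i))\<^sup>2 | i t. i \<in> {1..L+1} \<and> t \<in> {1..T}}"
proof -
  have "\<bar>(W t i - U i) $ j\<bar> \<le> linf_norm (W t i - U i)"
    unfolding linf_norm_def by (rule Max_ge) auto
  then have "(W t i $ j - U i $ j)\<^sup>2 \<le> (linf_norm (W t i - U i))\<^sup>2"
    by (metis abs_ge_zero power2_abs power_mono vector_minus_component)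
  also have "\<dots> \<le> Max {(linf_norm (W t i - U i))\<^sup>2 | i t. i \<in> {1..L+1} \<and> t \<in> {1..T}}"
  proof (rule Max_ge)
    have "{(linf_norm (W t i - U i))\<^sup>2 | i t. i \<in> {1..L+1} \<and> t \<in> {1..T}}
        = (\<lambda>(i,t). (linf_norm (W t i - U i))\<^sup>2) ` ({1..L+1} \<times> {1..T})" by force
    then show "finite {(linf_norm (W t i - U i))\<^sup>2 | i t. i \<in> {1..L+1} \<and> t \<in> {1..T}}" by simp
    show "(linf_norm (W t i - U i))\<^sup>2 \<in> {(linf_norm (W t i - U i))\<^sup>2 | i t. i \<in> {1..L+1} \<and> t \<in> {1..T}}"
      using assms by blast
  qed
  finally show ?thesis .
qed

theorem theorem2:
  fixes x :: "nat \<Rightarrow> real ^ 'd" and Y :: "nat \<Rightarrow> nat set"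
    and W :: "nat \<Rightarrow> nat \<Rightarrow> real ^ 'd" and Ustar :: "nat \<Rightarrow> real ^ 'd"
    and L T :: nat and \<delta> \<eta> :: real
  assumes "L \<ge> 1"
    and "\<forall>t\<in>{1..T}. Y t \<subseteq> {1..L}"
    and "\<delta> > 0" and "\<eta> > 0"
    and "salt_iterates \<delta> \<eta> L T x Y W"
    and "\<forall>U :: nat \<Rightarrow> real ^ 'd. (\<Sum>t=1..T. ml_loss L (x t) (Y t) Ustar)
            \<le> (\<Sum>t=1..T. ml_loss L (x t) (Y t) U)"
  shows "(\<Sum>t=1..T. ml_loss L (x t) (Y t) (W t) - ml_loss L (x t) (Y t) Ustar)
    \<le> (Max {(linf_norm (W t i - Ustar i))\<^sup>2 | i t. i \<in> {1..L+1} \<and> t \<in> {1..T}} / (2 * \<eta>) + \<eta>)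
        * (\<Sum>i=1..L+1. \<Sum>j\<in>UNIV. row_norm L x Y W T i j)
      + \<delta> / (2 * \<eta>) * frob_sq L Ustar"
proof -
  define Qm where "Qm = Max {(linf_norm (W t i - Ustar i))\<^sup>2 | i t. i \<in> {1..L+1} \<and> t \<in> {1..T}}"
  define g where "g t i = ml_grad L (x t) (Y t) (W t) i" for t i
  have salt: "\<forall>i\<in>{1..L+1}. W 1 i = 0"
    "\<forall>t\<in>{1..<T}. \<forall>i\<in>{1..L+1}.
        W (Suc t) i = (\<chi> j. W t i $ j - \<eta> * (ml_grad L (x t) (Y t) (W t) i $ j)
                                 / (\<delta> + row_norm L x Y W t i j))"
    using assms(5) unfolding salt_iterates_def by auto
  have "(\<Sum>t=1..T. ml_loss L (x t) (Y t) (W t) - ml_loss L (x t) (Y t) Ustar)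
      \<le> (\<Sum>t=1..T. \<Sum>i=1..L+1. g t i \<bullet> (W t i - Ustar i))"
    unfolding g_def by (rule sum_mono, rule loss_convex) (use assms(2) in auto)
  also have "\<dots> = (\<Sum>t=1..T. \<Sum>i=1..L+1. \<Sum>j\<in>UNIV. (g t i $ j) * (W t i $ j - Ustar i $ j))"
    by (simp add: inner_vec_def)
  also have "\<dots> = (\<Sum>i=1..L+1. \<Sum>t=1..T. \<Sum>j\<in>UNIV. (g t i $ j) * (W t i $ j - Ustar i $ j))"
    by (rule sum.swap)
  also have "\<dots> = (\<Sum>i=1..L+1. \<Sum>j\<in>UNIV. \<Sum>t=1..T. (g t i $ j) * (W t i $ j - Ustar i $ j))"
    by (rule sum.cong[OF refl], rule sum.swap)
  also have "\<dots> \<le> (\<Sum>i=1..L+1. \<Sum>j\<in>UNIV. (Qm/(2*\<eta>) + \<eta>) * row_norm L x Y W T i j + \<delta>/(2*\<eta>) * (Ustar i $ j)\<^sup>2)"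
  proof (intro sum_mono)
    fix i j assume i: "i \<in> {1..L+1}"
    have "(\<Sum>t=1..T. (g t i $ j) * (W t i $ j - Ustar i $ j))
        \<le> (Qm/(2*\<eta>) + \<eta>) * sqrt (\<Sum>k=1..T. (g k i $ j)\<^sup>2) + \<delta>/(2*\<eta>) * (Ustar i $ j)\<^sup>2"
    proof (rule scalar_bound[OF assms(3) assms(4)])
      show "W 1 i $ j = 0" using salt(1) i by simp
      show "W (Suc t) i $ j = W t i $ j - \<eta> * (g t i $ j) / (\<delta> + sqrt (\<Sum>k=1..t. (g k i $ j)\<^sup>2))"
        if "t \<in> {1..<T}" for t
        using salt(2) that i by (simp add: g_def row_norm_def)
      show "(W t i $ j - Ustar i $ j)\<^sup>2 \<le> Qm" if "t \<in> {1..T}" for t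
        unfolding Qm_def by (rule Qbound[OF i that])
    qed
    then show "(\<Sum>t=1..T. (g t i $ j) * (W t i $ j - Ustar i $ j))
        \<le> (Qm/(2*\<eta>) + \<eta>) * row_norm L x Y W T i j + \<delta>/(2*\<eta>) * (Ustar i $ j)\<^sup>2"
      by (simp add: row_norm_def g_def)
  qed
  also have "\<dots> = (Qm/(2*\<eta>) + \<eta>) * (\<Sum>i=1..L+1. \<Sum>j\<in>UNIV. row_norm L x Y W T i j)
      + \<delta> / (2 * \<eta>) * frob_sq L Ustar"
    unfolding frob_sq_def norm_sq_vec by (simp only: sum.distrib flip: sum_distrib_left)
  finally show ?thesis unfolding Qm_def .
qed

end
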